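(* For every integer $n\ge 2$, the complete graph $K_n$ satisfies $IDI(K_n)=n$.
   Context: For a finite simple connected graph $G=(V,E)$ with diameter $d$, a rank assignment is a function $f:V\to\mathbb{R}$; under $f$, the string of a vertex $v$ is the $d$-vector whose $i$-th coordinate is the sum of $f(w)$ over all vertices $w$ with $d(v,w)=i$. The ID-index $IDI(G)$ is the minimum $k$ such that there exists $f:V\to\mathbb{R}$ with $|f(V)|=k$ under which all vertices have distinct strings. *)

theory Defs
  imports Complex_Main
begin

definition simple_graph :: "'a set \<Rightarrow> ('a \<Rightarrow> 'a \<Rightarrow> bool) \<Rightarrow> bool" where
  "simple_graph V E \<longleftrightarrow> finite V \<and> V \<noteq> {} \<and>
     (\<forall>u v. E u v \<longrightarrow> u \<in> V \<and> v \<in> V) \<and>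
     (\<forall>u v. E u v \<longrightarrow> E v u) \<and> (\<forall>u. \<not> E u u)"

definition connected_graph :: "'a set \<Rightarrow> ('a \<Rightarrow> 'a \<Rightarrow> bool) \<Rightarrow> bool" where
  "connected_graph V E \<longleftrightarrow> (\<forall>u\<in>V. \<forall>v\<in>V. \<exists>k. (E ^^ k) u v)"

definition gdist :: "('a \<Rightarrow> 'a \<Rightarrow> bool) \<Rightarrow> 'a \<Rightarrow> 'a \<Rightarrow> nat" where
  "gdist E u v = (LEAST k. (E ^^ k) u v)"

definition diameter :: "'a set \<Rightarrow> ('a \<Rightarrow> 'a \<Rightarrow> bool) \<Rightarrow> nat" where
  "diameter V E = Max {gdist E u v | u v. u \<in> V \<and> v \<in> V}"

text \<open>The string of v under rank assignment f: the d-vector whose i-th coordinate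
(1 \<le> i \<le> d) is the sum of f over vertices at distance i from v; represented as a
function on nat that is 0 outside {1..d}.\<close>
definition vstring :: "'a set \<Rightarrow> ('a \<Rightarrow> 'a \<Rightarrow> bool) \<Rightarrow> ('a \<Rightarrow> real) \<Rightarrow> 'a \<Rightarrow> nat \<Rightarrow> real" where
  "vstring V E f v = (\<lambda>i. if 1 \<le> i \<and> i \<le> diameter V E
      then (\<Sum>w\<in>{w\<in>V. gdist E v w = i}. f w) else 0)"

definition IDI :: "'a set \<Rightarrow> ('a \<Rightarrow> 'a \<Rightarrow> bool) \<Rightarrow> nat" where
  "IDI V E = (LEAST k. \<exists>f :: 'a \<Rightarrow> real. card (f ` V) = k \<and> inj_on (vstring V E f) V)"

definition complete_graph_V :: "nat \<Rightarrow> nat set" where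
  "complete_graph_V n = {..<n}"

definition complete_graph_E :: "nat \<Rightarrow> nat \<Rightarrow> nat \<Rightarrow> bool" where
  "complete_graph_E n u v \<longleftrightarrow> u < n \<and> v < n \<and> u \<noteq> v"

end

theory Submission
  imports Defs
begin

lemma gd_K:
  assumes "u < n" "v < n"
  shows "gdist (complete_graph_E n) u v = (if u = v then 0 else 1)"
proof (cases "u = v")
  case True
  then show ?thesis unfolding gdist_def by (intro Least_equality) auto
next
  case False
  have h1: "(complete_graph_E n ^^ 1) u v" using assms False by (auto simp: complete_graph_E_def)
  have h0: "\<not> (complete_graph_E n ^^ 0) u v" using False by simp
  have "(LEAST k. (complete_graph_E n ^^ k) u v) = 1"
  proof (rule Least_equality)
    fix y assume y: "(complete_graph_E n ^^ y) u v"
    show "1 \<le> y"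
    proof (rule ccontr)
      assume "\<not> 1 \<le> y" then have "y = 0" by simp
      then show False using y h0 by simp
    qed
  qed (rule h1)
  then show ?thesis using False unfolding gdist_def by simp
qed

lemma diam_K:
  assumes "n \<ge> 2"
  shows "diameter (complete_graph_V n) (complete_graph_E n) = 1"
proof -
  have "{gdist (complete_graph_E n) u v | u v. u \<in> complete_graph_V n \<and> v \<in> complete_graph_V n} = {0,1}"
  proof
    show "{gdist (complete_graph_E n) u v | u v. u \<in> complete_graph_V n \<and> v \<in> complete_graph_V n} \<subseteq> {0,1}"
      using gd_K by (auto simp: complete_graph_V_def)
  next
    have a: "gdist (complete_graph_E n) 0 0 = 0" "gdist (complete_graph_E n) 0 1 = 1"
      using gd_K[of 0 n 0] gd_K[of 0 n 1] assms by auto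
    show "{0,1} \<subseteq> {gdist (complete_graph_E n) u v | u v. u \<in> complete_graph_V n \<and> v \<in> complete_graph_V n}"
    proof -
      have "0 \<in> complete_graph_V n" "1 \<in> complete_graph_V n" using assms by (auto simp: complete_graph_V_def)
      then show ?thesis using a by force
    qed
  qed
  then show ?thesis unfolding diameter_def by simp
qed

lemma vstring_K:
  assumes "n \<ge> 2" "v < n"
  shows "vstring (complete_graph_V n) (complete_graph_E n) f v
     = (\<lambda>i. if i = 1 then (\<Sum>w\<in>{..<n}. f w) - f v else 0)"
proof -
  have S: "{w \<in> complete_graph_V n. gdist (complete_graph_E n) v w = 1} = {..<n} - {v}"
    using gd_K[of v n] assms by (auto simp: complete_graph_V_def)
  have T: "(\<Sum>w\<in>{..<n} - {v}. f w) = (\<Sum>w\<in>{..<n}. f w) - f v"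
    using assms(2) by (simp add: sum_diff1)
  show ?thesis
  proof
    fix i
    show "vstring (complete_graph_V n) (complete_graph_E n) f v i
       = (if i = 1 then (\<Sum>w\<in>{..<n}. f w) - f v else 0)"
      unfolding vstring_def diam_K[OF assms(1)] using S T by (cases "i = 1") simp_all
  qed
qed

lemma inj_iff:
  assumes "n \<ge> 2"
  shows "inj_on (vstring (complete_graph_V n) (complete_graph_E n) f) (complete_graph_V n)
     \<longleftrightarrow> inj_on f (complete_graph_V n)"
proof -
  have "\<And>u v. u < n \<Longrightarrow> v < n \<Longrightarrow>
     (vstring (complete_graph_V n) (complete_graph_E n) f u = vstring (complete_graph_V n) (complete_graph_E n) f v)
      \<longleftrightarrow> f u = f v"
  proof -
    fix u v assume "u < n" "v < n"
    show "(vstring (complete_graph_V n) (complete_graph_E n) f u = vstring (complete_graph_V n) (complete_graph_E n) f v)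
      \<longleftrightarrow> f u = f v"
      unfolding vstring_K[OF assms \<open>u < n\<close>] vstring_K[OF assms \<open>v < n\<close>]
      by (metis add_diff_cancel_left' diff_diff_eq2)
  qed
  then show ?thesis unfolding inj_on_def complete_graph_V_def by auto
qed

theorem mainTheorem11:
  fixes n :: nat
  assumes "n \<ge> 2"
  shows "IDI (complete_graph_V n) (complete_graph_E n) = n"
  unfolding IDI_def
proof (rule Least_equality)
  show "\<exists>f :: nat \<Rightarrow> real. card (f ` complete_graph_V n) = n \<and>
     inj_on (vstring (complete_graph_V n) (complete_graph_E n) f) (complete_graph_V n)"
    proof (rule exI[of _ real], intro conjI)
    show "inj_on (vstring (complete_graph_V n) (complete_graph_E n) real) (complete_graph_V n)"
      unfolding inj_iff[OF assms] by (simp add: inj_on_def)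
  qed (simp add: card_image complete_graph_V_def)
next
  fix k assume "\<exists>f :: nat \<Rightarrow> real. card (f ` complete_graph_V n) = k \<and>
     inj_on (vstring (complete_graph_V n) (complete_graph_E n) f) (complete_graph_V n)"
  then show "n \<le> k" unfolding inj_iff[OF assms] by (auto simp: card_image complete_graph_V_def)
qed

end
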